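(* Let $T$ be a p-string of length $n$ and let $1<i\le n$. Let $v_{i-1}$ be the node of $\mathrm{PPH}(T[i-1..])$ with id $i-1$ (the node inserted when passing from $\mathrm{PPH}(T[i..])$ to $\mathrm{PPH}(T[i-1..])$). Then in $\mathrm{PPH}(T[i-1..])$ there is no symbol $a\in\Sigma\cup\{0,\ldots,n-1\}$ for which $\mathrm{rslink}(a,v_{i-1})$ is defined.
   Context: Let $\Sigma$ and $\Pi$ be disjoint alphabets. A p-string is a finite string over $\Sigma\cup\Pi$. For a string $S$, $S[i]$ is its $i$-th character, $S[i..j]$ is the substring from position $i$ to $j$ (empty if $j<i$), and $S[i..]=S[i..|S|]$. The previous encoding $\mathrm{prev}(S)$ of a p-string $S$ of length $n$ is the sequence of length $n$ defined by: - $\mathrm{prev}(S)[i]=S[i]$ if $S[i]\in\Sigma$; - $\mathrm{prev}(S)[i]=0$ if $S[i]\in\Pi$ does not occur in $S[1..i-1]$; - $\mathrm{prev}(S)[i]=i-j$ otherwise, where $j<i$ is the largest position with $S[j]=S[i]$. Sequence hash tree. Let $\langle S_1,\ldots,S_k\rangle$ be a sequence of strings with $S_1=\varepsilon$ and with $S_i$ not a prefix of $S_j$ for any $j<i$. Its sequence hash tree is built as follows. Start from a root representing $\varepsilon$. For $i=2,\ldots,k$, insert as a new node the shortest prefix $p_i$ of $S_i$ that is not yet a node. Attach it as a child of the longest prefix $q_i$ of $S_i$ that is already a node, via an edge labeled $S_i[|q_i|+1]$. $\mathrm{PPH}(T[i..])$ is the sequence hash tree of $\langle\varepsilon,\mathrm{prev}(T[n..]),\ldots,\mathrm{prev}(T[i..])\rangle$.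 Nodes are identified with their root-to-node path labels, and $|v|$ is the length. The node with id $j$ is the node inserted for $\mathrm{prev}(T[j..])$. Reversed suffix links in a heap with nodes over $\Sigma\cup\{0,\ldots,n-1\}$ are defined as follows: - if $a\in\Sigma\cup\{0\}$ and $av$ is a node, then $\mathrm{rslink}(a,v)=av$; - if $a\in\{1,\ldots,n-1\}$, $v[a]=0$, and $0\,v[1..a-1]\,a\,v[a+1..|v|]$ is a node, then $\mathrm{rslink}(a,v)$ is that node; - otherwise $\mathrm{rslink}(a,v)$ is undefined. *)

theory Defs
  imports Main
begin

(* A p-string is a list over 's + 'p : Inl c is a static symbol (Sigma),
   Inr x is a parameter symbol (Pi).  Lists are 0-indexed internally;
   the paper's 1-based position i corresponds to list index i - 1. *)

definition prev_at :: "('s + 'p) list \<Rightarrow> nat \<Rightarrow> 's + nat" where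
  "prev_at S i = (case S ! i of
      Inl c \<Rightarrow> Inl c
    | Inr x \<Rightarrow> (if Inr x \<notin> set (take i S) then Inr 0
                 else Inr (i - (GREATEST j. j < i \<and> S ! j = Inr x))))"

definition prev :: "('s + 'p) list \<Rightarrow> ('s + nat) list" where
  "prev S = map (prev_at S) [0..<length S]"

(* Sequence hash tree: nodes identified with their path labels.
   Inserting string s into node set N adds the shortest prefix of s not yet a node
   (attached below its longest prefix which is a node). *)
definition sht_new :: "'a list set \<Rightarrow> 'a list \<Rightarrow> 'a list" where
  "sht_new N s = take (LEAST k. take k s \<notin> N) s"

definition sht_insert :: "'a list set \<Rightarrow> 'a list \<Rightarrow> 'a list set" where
  "sht_insert N s = insert (sht_new N s) N"

definition sht_nodes :: "'a list list \<Rightarrow> 'a list set" where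
  "sht_nodes xs = foldl sht_insert {[]} xs"

definition suf :: "'c list \<Rightarrow> nat \<Rightarrow> 'c list" where
  "suf T j = drop (j - 1) T"

(* nodes of PPH(T[i..]) = seq. hash tree of <eps, prev(T[n..]), ..., prev(T[i..])> *)
definition pph :: "('s + 'p) list \<Rightarrow> nat \<Rightarrow> ('s + nat) list set" where
  "pph T i = sht_nodes (map (\<lambda>j. prev (suf T j)) (rev [i..<Suc (length T)]))"

(* node with id j: the node inserted for prev(T[j..]) into PPH(T[j+1..]) *)
definition pph_node :: "('s + 'p) list \<Rightarrow> nat \<Rightarrow> ('s + nat) list" where
  "pph_node T j = sht_new (pph T (Suc j)) (prev (suf T j))"

(* reversed suffix link in heap H (set of nodes); None = undefined.
   For a = Inr k with k >= 1, v[k] is the 1-based k-th symbol, i.e. v ! (k - 1). *)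
definition rslink :: "('s + nat) list set \<Rightarrow> 's + nat \<Rightarrow> ('s + nat) list \<Rightarrow> ('s + nat) list option" where
  "rslink H a v = (case a of
      Inl c \<Rightarrow> (if a # v \<in> H then Some (a # v) else None)
    | Inr k \<Rightarrow>
        (if k = 0 then (if a # v \<in> H then Some (a # v) else None)
         else if k \<le> length v \<and> v ! (k - 1) = Inr 0
                 \<and> Inr 0 # take (k - 1) v @ Inr k # drop k v \<in> H
              then Some (Inr 0 # take (k - 1) v @ Inr k # drop k v)
              else None))"

end

theory Submission
  imports Defs
begin

definition pc :: "'a list set \<Rightarrow> bool" where
  "pc N = (\<forall>x\<in>N. \<forall>m. take m x \<in> N)"

definition gfix :: "('s + nat) list \<Rightarrow> ('s + nat) list" where
  "gfix w = map (\<lambda>m. if w!m = Inr (Suc m) then Inr 0 else w!m) [0..<length w]"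

lemma length_prev[simp]: "length (prev S) = length S" by (simp add: prev_def)

lemma nth_prev: "m < length S \<Longrightarrow> prev S ! m = prev_at S m" by (simp add: prev_def)

lemma prev_at_ne: "prev_at S m \<noteq> Inr (Suc m)"
  by (auto simp: prev_at_def split: sum.split)

lemma gfix_take: "gfix (take l w) = take l (gfix w)"
  by (rule nth_equalityI) (auto simp: gfix_def)

lemma gt: "gfix (tl (take L w)) = take (L - 1) (gfix (tl w))"
  by (simp add: tl_take gfix_take)

lemma mem_take: "m \<le> length xs \<Longrightarrow> (a \<in> set (take m xs)) = (\<exists>j<m. xs!j = a)"
  by (auto simp: in_set_conv_nth)

lemma prev_at_Cons:
  assumes m: "m < length S'"
  shows "prev_at S' m = (if prev_at (c#S') (Suc m) = Inr (Suc m) then Inr 0 else prev_at (c#S') (Suc m))"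
proof (cases "S'!m")
  case (Inl a) then show ?thesis by (simp add: prev_at_def)
next
  case (Inr x)
  show ?thesis
  proof (cases "Inr x \<in> set (take m S')")
    case True
    then obtain j0 where j0: "j0 < m" "S'!j0 = Inr x" using m mem_take[of m S'] by auto
    define G' where "G' = (GREATEST j. j < m \<and> S'!j = Inr x)"
    have G'1: "G' < m \<and> S'!G' = Inr x" unfolding G'_def
      by (rule GreatestI_nat[of _ j0 m]) (use j0 in auto)
    have G'2: "\<And>j. j < m \<and> S'!j = Inr x \<Longrightarrow> j \<le> G'" unfolding G'_def
      by (rule Greatest_le_nat[of _ _ m]) auto
    have G: "(GREATEST j. j < Suc m \<and> (c#S')!j = Inr x) = Suc G'"
    proof (rule Greatest_equality)
      show "Suc G' < Suc m \<and> (c#S')!(Suc G') = Inr x" using G'1 by simp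
      fix y assume "y < Suc m \<and> (c#S')!y = Inr x"
      then show "y \<le> Suc G'" using G'2[of "y-1"] by (cases y) auto
    qed
    have mem: "Inr x \<in> set (take (Suc m) (c#S'))" using True by simp
    have e1: "prev_at S' m = Inr (m - G')" using Inr True by (simp add: prev_at_def G'_def)
    have e2: "prev_at (c#S') (Suc m) = Inr (m - G')" using Inr mem G by (simp add: prev_at_def)
    show ?thesis using e1 e2 by simp
  next
    case False
    show ?thesis
    proof (cases "c = Inr x")
      case True
      have G: "(GREATEST j. j < Suc m \<and> (c#S')!j = Inr x) = 0"
      proof (rule Greatest_equality)
        show "0 < Suc m \<and> (c#S')!0 = Inr x" using True by simp
        fix y assume y: "y < Suc m \<and> (c#S')!y = Inr x"
        show "y \<le> 0"
        proof (cases y)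
          case (Suc y')
          then have "y' < m" "S'!y' = Inr x" using y by auto
          then have "Inr x \<in> set (take m S')" using m mem_take[of m S'] by auto
          then show ?thesis using False by simp
        qed simp
      qed
      have e1: "prev_at S' m = Inr 0" using Inr False by (simp add: prev_at_def)
      have e2: "prev_at (c#S') (Suc m) = Inr (Suc m)" using Inr True G by (simp add: prev_at_def)
      show ?thesis using e1 e2 by simp
    next
      case False2: False
      have e1: "prev_at S' m = Inr 0" using Inr False by (simp add: prev_at_def)
      have e2: "prev_at (c#S') (Suc m) = Inr 0" using Inr False False2 by (simp add: prev_at_def)
      show ?thesis using e1 e2 by simp
    qed
  qed
qed

lemma prev_tl: "prev (tl S) = gfix (tl (prev S))"
proof (cases S)
  case Nil then show ?thesis by (simp add: prev_def gfix_def)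
next
  case (Cons c S')
  show ?thesis
  proof (rule nth_equalityI)
    show "length (prev (tl S)) = length (gfix (tl (prev S)))" by (simp add: gfix_def)
    fix m assume "m < length (prev (tl S))"
    then have m: "m < length S'" using Cons by simp
    have "gfix (tl (prev S)) ! m = (if prev_at (c#S') (Suc m) = Inr (Suc m) then Inr 0 else prev_at (c#S') (Suc m))"
      using m Cons by (simp add: gfix_def nth_tl nth_prev)
    then show "prev (tl S) ! m = gfix (tl (prev S)) ! m"
      using m Cons prev_at_Cons[OF m, of c] by (simp add: nth_prev)
  qed
qed

lemma prev_suf_Suc: "1 \<le> k \<Longrightarrow> prev (suf T (Suc k)) = gfix (tl (prev (suf T k)))"
proof -
  assume "1 \<le> k"
  then have "tl (drop (k-1) T) = drop k T" by (cases k) (auto simp: drop_Suc tl_drop)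
  then show ?thesis by (simp add: suf_def prev_tl[symmetric])
qed

lemma sht_new_take: "\<exists>l. sht_new N s = take l s" unfolding sht_new_def by blast

lemma L1: "sht_new N s = take (length (sht_new N s)) s"
proof -
  obtain l where "sht_new N s = take l s" using sht_new_take by blast
  then show ?thesis by (simp add: min_def)
qed

lemma L2: "l < length (sht_new N s) \<Longrightarrow> take l (sht_new N s) \<in> N"
proof -
  assume l: "l < length (sht_new N s)"
  define L where "L = (LEAST k. take k s \<notin> N)"
  have sn: "sht_new N s = take L s" by (simp add: sht_new_def L_def)
  have lL: "l < L" using l sn by simp
  have e: "take l (sht_new N s) = take l s" using sn lL by simp
  show ?thesis
  proof (cases "\<exists>k. take k s \<notin> N")
    case True
    then show ?thesis using e lL not_less_Least[of l "\<lambda>k. take k s \<notin> N"] L_def by auto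
  next
    case False then show ?thesis using e by auto
  qed
qed

lemma L3: "\<exists>l. take l s \<notin> N \<Longrightarrow> sht_new N s \<notin> N"
  unfolding sht_new_def by (rule LeastI_ex)

lemma L4:
  assumes "pc N" "take m s \<in> N"
  shows "take (Suc m) s \<in> sht_insert N s"
proof (cases "take (Suc m) s \<in> N")
  case True then show ?thesis by (simp add: sht_insert_def)
next
  case False
  define L where "L = (LEAST k. take k s \<notin> N)"
  have "L \<le> Suc m" unfolding L_def using False by (simp add: Least_le)
  moreover have "take L s \<notin> N" unfolding L_def using False by (rule LeastI)
  moreover have "\<And>l. l \<le> m \<Longrightarrow> take l s \<in> N"
  proof -
    fix l assume "l \<le> m"
    then have "take l s = take l (take m s)" by (simp add: min_def)
    then show "take l s \<in> N" using assms unfolding pc_def by metis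
  qed
  ultimately have "L = Suc m" by (meson le_SucE)
  then show ?thesis by (simp add: sht_insert_def sht_new_def L_def)
qed

lemma L5: "pc N \<Longrightarrow> pc (sht_insert N s)"
  unfolding pc_def sht_insert_def
proof (intro ballI allI)
  fix x m
  assume pc: "\<forall>x\<in>N. \<forall>m. take m x \<in> N" and x: "x \<in> insert (sht_new N s) N"
  show "take m x \<in> insert (sht_new N s) N"
  proof (cases "x \<in> N")
    case True then show ?thesis using pc by blast
  next
    case False
    then have xe: "x = sht_new N s" using x by simp
    show ?thesis
    proof (cases "m < length x")
      case True then show ?thesis using L2 xe by blast
    next
      case False then show ?thesis using xe by simp
    qed
  qed
qed

lemma pph_step: "k \<le> length T \<Longrightarrow> pph T k = sht_insert (pph T (Suc k)) (prev (suf T k))"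
proof -
  assume "k \<le> length T"
  then have "[k..<Suc (length T)] = k # [Suc k..<Suc (length T)]" by (simp add: upt_conv_Cons)
  then show ?thesis by (simp add: pph_def sht_nodes_def)
qed

lemma pph_big: "length T < k \<Longrightarrow> pph T k = {[]}"
  by (simp add: pph_def sht_nodes_def)

lemma inv:
  "1 \<le> k \<Longrightarrow> [] \<in> pph T k \<and> pc (pph T k) \<and> (\<forall>x\<in>pph T k. length x \<le> length T + 1 - k)
     \<and> (\<forall>x\<in>pph T k. x \<noteq> [] \<longrightarrow> gfix (tl x) \<in> pph T k)"
proof (induction "length T + 2 - k" arbitrary: k rule: less_induct)
  case less
  show ?case
  proof (cases "length T < k")
    case True then show ?thesis by (simp add: pph_big pc_def)
  next
    case False
    hence kn: "k \<le> length T" by simp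
    let ?N = "pph T (Suc k)"
    let ?P = "prev (suf T k)"
    let ?Q = "prev (suf T (Suc k))"
    have step: "pph T k = sht_insert ?N ?P" using kn by (rule pph_step)
    have IH1: "[] \<in> ?N \<and> pc ?N \<and> (\<forall>x\<in>?N. length x \<le> length T + 1 - Suc k) \<and> (\<forall>x\<in>?N. x \<noteq> [] \<longrightarrow> gfix (tl x) \<in> ?N)"
      using less.hyps[of "Suc k"] kn by simp
    have IH2: "pc (pph T (Suc (Suc k))) \<and> (\<forall>x\<in>pph T (Suc (Suc k)). x \<noteq> [] \<longrightarrow> gfix (tl x) \<in> pph T (Suc (Suc k)))"
      using less.hyps[of "Suc (Suc k)"] kn by simp
    define x where "x = sht_new ?N ?P"
    have Nk: "pph T k = insert x ?N" using step by (simp add: sht_insert_def x_def)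
    have xpre: "x = take (length x) ?P" unfolding x_def by (rule L1)
    have xpref: "\<And>l. l < length x \<Longrightarrow> take l x \<in> ?N" unfolding x_def by (rule L2)
    have lenP: "length ?P = length T + 1 - k" using less.prems by (simp add: suf_def)
    have lenx: "length x \<le> length ?P" by (subst xpre) simp
    have QP: "?Q = gfix (tl ?P)" using less.prems by (rule prev_suf_Suc)
    have C: "x \<noteq> [] \<Longrightarrow> gfix (tl x) \<in> pph T k"
    proof -
      assume "x \<noteq> []"
      define L where "L = length x"
      have xL: "x = take L ?P" unfolding L_def by (rule xpre)
      have L1': "take (L-1) x = take (L-1) ?P" using xL by (simp add: min_def)
      have y: "take (L-1) ?P \<in> ?N" using xpref[of "L-1"] \<open>x\<noteq>[]\<close> L_def L1' by simp
      have gx: "gfix (tl x) = take (L-1) ?Q"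
        using xL QP gt[of L ?P] by simp
      show ?thesis
      proof (cases "L - 1 = 0")
        case True then show ?thesis using gx IH1 Nk by simp
      next
        case False
        have lenY: "length (take (L-1) ?P) = L - 1" using lenx L_def by simp
        have "take (L-1) ?Q \<in> ?N"
        proof (cases "Suc k \<le> length T")
          case False2: False
          then have "?N = {[]}" by (simp add: pph_big)
          then have "take (L-1) ?P = []" using y by blast
          then have "L - 1 = 0" using lenY by (metis list.size(3))
          then show ?thesis using False by blast
        next
          case True
          let ?M = "pph T (Suc (Suc k))"
          have N1: "?N = sht_insert ?M ?Q" using True by (rule pph_step)
          define z where "z = sht_new ?M ?Q"
          have "?N = insert z ?M" using N1 by (simp add: sht_insert_def z_def)
          then consider "take (L-1) ?P = z" | "take (L-1) ?P \<in> ?M" using y by blast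
          then show ?thesis
          proof cases
            case 1
            have "z = take (length z) ?Q" unfolding z_def by (rule L1)
            then have "take (L-1) ?Q = z" using 1 lenY by simp
            then show ?thesis using \<open>?N = insert z ?M\<close> by simp
          next
            case 2
            have ne: "take (L-1) ?P \<noteq> []" using lenY False by (metis list.size(3))
            have "gfix (tl (take (L-1) ?P)) \<in> ?M" using IH2 2 ne by blast
            moreover have "gfix (tl (take (L-1) ?P)) = take (L-1-1) ?Q" using QP gt[of "L-1" ?P] by simp
            ultimately have "take (L-1-1) ?Q \<in> ?M" by simp
            then have "take (Suc (L-1-1)) ?Q \<in> sht_insert ?M ?Q" using IH2 L4 by blast
            moreover have "Suc (L-1-1) = L-1" using False by simp
            ultimately show ?thesis using N1 by simp
          qed
        qed
        then show ?thesis using gx Nk by simp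
      qed
    qed
    show ?thesis
    proof (intro conjI)
      show "[] \<in> pph T k" using IH1 Nk by simp
      show "pc (pph T k)" unfolding step using IH1 L5 by blast
      show "\<forall>y\<in>pph T k. length y \<le> length T + 1 - k"
      proof
        fix y assume "y \<in> pph T k"
        then have "y = x \<or> y \<in> ?N" using Nk by blast
        then show "length y \<le> length T + 1 - k"
        proof
          assume "y = x" then show ?thesis using lenx lenP by simp
        next
          assume "y \<in> ?N" then have "length y \<le> length T + 1 - Suc k" using IH1 by blast
          then show ?thesis by simp
        qed
      qed
      show "\<forall>y\<in>pph T k. y \<noteq> [] \<longrightarrow> gfix (tl y) \<in> pph T k"
      proof (intro ballI impI)
        fix y assume y: "y \<in> pph T k" "y \<noteq> []"
        then have "y = x \<or> y \<in> ?N" using Nk by blast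
        then show "gfix (tl y) \<in> pph T k"
        proof
          assume "y = x" then show ?thesis using C y by blast
        next
          assume "y \<in> ?N" then have "gfix (tl y) \<in> ?N" using IH1 y by blast
          then show ?thesis using Nk by blast
        qed
      qed
    qed
  qed
qed

theorem lemma6:
  fixes T :: "('s + 'p) list" and i :: nat
  assumes "1 < i" and "i \<le> length T"
  shows "\<forall>a. (case a of Inl _ \<Rightarrow> True | Inr k \<Rightarrow> k < length T) \<longrightarrow>
           rslink (pph T (i - 1)) a (pph_node T (i - 1)) = None"
proof -
  let ?N = "pph T i"
  let ?P = "prev (suf T (i - 1))"
  define v where "v = pph_node T (i - 1)"
  have si: "Suc (i - 1) = i" using assms by simp
  have vdef: "v = sht_new ?N ?P" unfolding v_def pph_node_def si ..
  have H0: "pph T (i - 1) = sht_insert (pph T (Suc (i - 1))) ?P"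
    by (rule pph_step) (use assms in simp)
  have H: "pph T (i - 1) = insert v ?N"
    unfolding H0 si sht_insert_def vdef ..
  have I: "[] \<in> ?N \<and> pc ?N \<and> (\<forall>x\<in>?N. length x \<le> length T + 1 - i) \<and> (\<forall>x\<in>?N. x \<noteq> [] \<longrightarrow> gfix (tl x) \<in> ?N)"
    using inv[of i T] assms by linarith
  have lenP: "length ?P = length T + 2 - i" using assms by (simp add: suf_def)
  have "take (length ?P) ?P \<notin> ?N"
  proof
    assume "take (length ?P) ?P \<in> ?N"
    then have "length (take (length ?P) ?P) \<le> length T + 1 - i" using I by blast
    then show False using lenP assms by simp
  qed
  then have vN: "v \<notin> ?N" unfolding vdef by (intro L3) blast
  have vpre: "v = take (length v) ?P" unfolding vdef by (rule L1)
  have vnth: "\<And>m. m < length v \<Longrightarrow> v!m \<noteq> Inr (Suc m)"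
  proof -
    fix m assume m: "m < length v"
    then have "v!m = ?P!m" using vpre by (metis nth_take)
    moreover have "m < length ?P" using m vpre by (metis length_take min.strict_boundedE)
    ultimately show "v!m \<noteq> Inr (Suc m)" by (simp add: nth_prev prev_at_ne)
  qed
  have gv: "gfix v = v" by (rule nth_equalityI) (auto simp: gfix_def vnth)
  have key: "\<And>w. w \<in> pph T (i - 1) \<Longrightarrow> length w = Suc (length v) \<Longrightarrow> gfix (tl w) = v \<Longrightarrow> False"
  proof -
    fix w assume w: "w \<in> pph T (i - 1)" "length w = Suc (length v)" "gfix (tl w) = v"
    then have "w \<in> ?N" using H by auto
    moreover have "w \<noteq> []" using w by auto
    ultimately show False using I w vN by metis
  qed
  show ?thesis
    unfolding v_def[symmetric]
  proof (intro allI impI)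
    fix a :: "'s + nat"
    show "rslink (pph T (i - 1)) a v = None"
    proof (cases a)
      case (Inl c)
      then show ?thesis using key[of "a # v"] gv by (auto simp: rslink_def)
    next
      case (Inr k)
      show ?thesis
      proof (cases "k = 0")
        case True
        then show ?thesis using Inr key[of "a # v"] gv by (auto simp: rslink_def)
      next
        case False
        show ?thesis
        proof (cases "k \<le> length v \<and> v ! (k - 1) = Inr 0")
          case True
          let ?w = "Inr 0 # take (k - 1) v @ Inr k # drop k v"
          have upd: "take (k - 1) v @ Inr k # drop k v = v[k - 1 := Inr k]"
          proof -
            have kl: "k \<le> length v" using True by blast
            have kv: "k - 1 < length v" using kl False by linarith
            have "Suc (k - 1) = k" using False by simp
            then show ?thesis using upd_conv_take_nth_drop[OF kv, of "Inr k"] by simp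
          qed
          have "gfix (tl ?w) = v"
          proof -
            have "gfix (v[k - 1 := Inr k]) = v"
            proof (rule nth_equalityI)
              show "length (gfix (v[k - 1 := Inr k])) = length v" by (simp add: gfix_def)
              fix m assume "m < length (gfix (v[k - 1 := Inr k]))"
              then have m: "m < length v" by (simp add: gfix_def)
              show "gfix (v[k - 1 := Inr k]) ! m = v ! m"
                using m True False vnth[OF m] by (cases "k - 1 = m") (auto simp: gfix_def nth_list_update)
            qed
            then show ?thesis using upd by simp
          qed
          moreover have "length ?w = Suc (length v)"
          proof -
            have kl2: "k \<le> length v" using True by blast
            then show ?thesis using False by (simp add: min_def) arith
          qed
          ultimately show ?thesis using Inr False True key[of ?w] by (auto simp: rslink_def)
        next
          case False2: False
          then show ?thesis using Inr False by (auto simp: rslink_def)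
        qed
      qed
    qed
  qed
qed

end
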